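(* Let $A[0\ldots n-1]$ and $B[0\ldots m-1]$ be sequences over a totally ordered alphabet, and run the procedure $\textsc{LCISLengths}(A,B)$ described in the context. Then for every match $(i,j)$ (i.e. $A[i]=B[j]$) the procedure returns in $\texttt{inc}[(i,j)]$ the length of a longest common strictly increasing subsequence ending at that match (i.e. whose last index pair is $(i,j)$), together with a valid predecessor pointer $\texttt{parent}[(i,j)]$ (the preceding index pair on such a longest subsequence, absent if the subsequence has length $1$).
   Context: A common subsequence of $A$ and $B$ is given by index pairs $(i_1,j_1),\dots,(i_\ell,j_\ell)$ with $i_1<\dots<i_\ell$, $j_1<\dots<j_\ell$ and $A[i_k]=B[j_k]$ for all $k$; it is strictly increasing if $A[i_1]<\dots<A[i_\ell]$. Procedure $\textsc{LCISLengths}(A,B)$: initialise arrays $\texttt{dp}[0..m-1]\gets 0$, $\texttt{dp\_i}[0..m-1]\gets -1$, and empty maps $\texttt{parent}$, $\texttt{inc}$. For $i=0,\dots,n-1$: set $best\gets 0$, $best\_j\gets -1$; for $j=0,\dots,m-1$: (a) if $A[i]=B[j]$ and $best+1>\texttt{dp}[j]$, then set $\texttt{dp}[j]\gets best+1$; if $best\_j\neq -1$ set $\texttt{parent}[(i,j)]\gets(\texttt{dp\_i}[best\_j],best\_j)$; set $\texttt{inc}[(i,j)]\gets\texttt{dp}[j]$ and $\texttt{dp\_i}[j]\gets i$; (b) if $B[j]<A[i]$ and $\texttt{dp}[j]>best$, set $best\gets\texttt{dp}[j]$, $best\_j\gets j$. Finally return $(\texttt{inc},\texttt{parent})$. *)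

theory Defs
  imports Main
begin

definition is_cis :: "'a::linorder list \<Rightarrow> 'a list \<Rightarrow> (nat \<times> nat) list \<Rightarrow> bool" where
  "is_cis A B ps \<longleftrightarrow>
     (\<forall>k < length ps. fst (ps ! k) < length A \<and> snd (ps ! k) < length B
                      \<and> A ! fst (ps ! k) = B ! snd (ps ! k)) \<and>
     (\<forall>k. Suc k < length ps \<longrightarrow>
            fst (ps ! k) < fst (ps ! Suc k) \<and> snd (ps ! k) < snd (ps ! Suc k)
          \<and> A ! fst (ps ! k) < A ! fst (ps ! Suc k))"

definition lcis_end :: "'a::linorder list \<Rightarrow> 'a list \<Rightarrow> nat \<Rightarrow> nat \<Rightarrow> nat" where
  "lcis_end A B i j = Max {length ps | ps. is_cis A B ps \<and> ps \<noteq> [] \<and> last ps = (i, j)}"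

text \<open>State: (dp, dp_i, parent, inc, best, best_j). Arrays are modelled as functions,
  maps as partial functions; the sentinel -1 is kept by using int.\<close>

type_synonym lcis_state =
  "(nat \<Rightarrow> nat) \<times> (nat \<Rightarrow> int) \<times> (nat \<times> nat \<Rightarrow> (int \<times> int) option)
   \<times> (nat \<times> nat \<Rightarrow> nat option) \<times> nat \<times> int"

definition lcis_inner_step :: "'a::linorder list \<Rightarrow> 'a list \<Rightarrow> nat \<Rightarrow> nat \<Rightarrow> lcis_state \<Rightarrow> lcis_state" where
  "lcis_inner_step A B i j st =
    (case st of (dp, dpi, par, inc, best, bj) \<Rightarrow>
      let (dp', dpi', par', inc') =
            (if A ! i = B ! j \<and> best + 1 > dp j
             then (dp(j := best + 1),
                   dpi(j := int i),
                   (if bj \<noteq> -1 then par((i, j) := Some (dpi (nat bj), bj)) else par),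
                   inc((i, j) := Some (best + 1)))
             else (dp, dpi, par, inc));
          (best', bj') = (if B ! j < A ! i \<and> dp' j > best then (dp' j, int j) else (best, bj))
      in (dp', dpi', par', inc', best', bj'))"

definition lcis_outer_step :: "'a::linorder list \<Rightarrow> 'a list \<Rightarrow> nat \<Rightarrow> lcis_state \<Rightarrow> lcis_state" where
  "lcis_outer_step A B i st =
    (case st of (dp, dpi, par, inc, _, _) \<Rightarrow>
       fold (lcis_inner_step A B i) [0..<length B] (dp, dpi, par, inc, 0, -1))"

definition lcis_lengths :: "'a::linorder list \<Rightarrow> 'a list
      \<Rightarrow> (nat \<times> nat \<Rightarrow> nat option) \<times> (nat \<times> nat \<Rightarrow> (int \<times> int) option)" where
  "lcis_lengths A B =
    (case fold (lcis_outer_step A B) [0..<length A]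
            ((\<lambda>_. 0), (\<lambda>_. -1), Map.empty, Map.empty, 0, -1) of
       (dp, dpi, par, inc, _, _) \<Rightarrow> (inc, par))"

end

theory Submission
  imports Defs
begin

definition mt :: "'a::linorder list \<Rightarrow> 'a list \<Rightarrow> nat \<Rightarrow> nat \<Rightarrow> bool" where
  "mt A B i j \<longleftrightarrow> i < length A \<and> j < length B \<and> A ! i = B ! j"

lemma is_cis_Nil[simp]: "is_cis A B []"
  by (simp add: is_cis_def)

lemma is_cis_snoc:
  "is_cis A B (ps @ [x]) \<longleftrightarrow> is_cis A B ps \<and> fst x < length A \<and> snd x < length B \<and> A ! fst x = B ! snd x
     \<and> (ps \<noteq> [] \<longrightarrow> fst (last ps) < fst x \<and> snd (last ps) < snd x \<and> A ! fst (last ps) < A ! fst x)"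
proof (cases "ps = []")
  case True
  then show ?thesis by (auto simp: is_cis_def)
next
  case False
  then have lp: "last ps = ps ! (length ps - 1)" by (simp add: last_conv_nth)
  show ?thesis
  proof
    assume h: "is_cis A B (ps @ [x])"
    have "is_cis A B ps" unfolding is_cis_def
    proof (rule conjI; intro allI impI)
      fix k assume k: "k < length ps"
      then show "fst (ps ! k) < length A \<and> snd (ps ! k) < length B \<and> A ! fst (ps ! k) = B ! snd (ps ! k)"
        using h unfolding is_cis_def by (metis (no_types, lifting) length_append_singleton less_SucI nth_append)
    next
      fix k assume k: "Suc k < length ps"
      have "Suc k < length (ps @ [x])" using k by simp
      then show "fst (ps ! k) < fst (ps ! Suc k) \<and> snd (ps ! k) < snd (ps ! Suc k) \<and> A ! fst (ps ! k) < A ! fst (ps ! Suc k)"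
      proof -
        have "fst ((ps@[x]) ! k) < fst ((ps@[x]) ! Suc k) \<and> snd ((ps@[x]) ! k) < snd ((ps@[x]) ! Suc k) \<and> A ! fst ((ps@[x]) ! k) < A ! fst ((ps@[x]) ! Suc k)"
          using h \<open>Suc k < length (ps @ [x])\<close> unfolding is_cis_def by blast
        then show ?thesis using k by (simp add: nth_append)
      qed
    qed
    moreover have "fst x < length A \<and> snd x < length B \<and> A ! fst x = B ! snd x"
      using h unfolding is_cis_def by (metis length_append_singleton lessI nth_append_length)
    moreover have "fst (last ps) < fst x \<and> snd (last ps) < snd x \<and> A ! fst (last ps) < A ! fst x"
      using h False unfolding is_cis_def lp
      apply (elim conjE)
      apply (drule spec[where x="length ps - 1"], drule spec[where x="length ps - 1"])
      by (auto simp: nth_append)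
    ultimately show "is_cis A B ps \<and> fst x < length A \<and> snd x < length B \<and> A ! fst x = B ! snd x
     \<and> (ps \<noteq> [] \<longrightarrow> fst (last ps) < fst x \<and> snd (last ps) < snd x \<and> A ! fst (last ps) < A ! fst x)" by blast
  next
    assume h: "is_cis A B ps \<and> fst x < length A \<and> snd x < length B \<and> A ! fst x = B ! snd x
     \<and> (ps \<noteq> [] \<longrightarrow> fst (last ps) < fst x \<and> snd (last ps) < snd x \<and> A ! fst (last ps) < A ! fst x)"
    show "is_cis A B (ps @ [x])"
      unfolding is_cis_def
    proof (rule conjI; intro allI impI)
      fix k assume "k < length (ps @ [x])"
      then show "fst ((ps @ [x]) ! k) < length A \<and> snd ((ps @ [x]) ! k) < length B \<and> A ! fst ((ps @ [x]) ! k) = B ! snd ((ps @ [x]) ! k)"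
        using h unfolding is_cis_def by (auto simp: nth_append less_Suc_eq)
    next
      fix k assume k: "Suc k < length (ps @ [x])"
      show "fst ((ps @ [x]) ! k) < fst ((ps @ [x]) ! Suc k) \<and> snd ((ps @ [x]) ! k) < snd ((ps @ [x]) ! Suc k) \<and> A ! fst ((ps @ [x]) ! k) < A ! fst ((ps @ [x]) ! Suc k)"
      proof (cases "Suc k < length ps")
        case True
        then show ?thesis using h unfolding is_cis_def by (auto simp: nth_append)
      next
        case F: False
        then have "k = length ps - 1" "Suc k = length ps" using k False by auto
        then show ?thesis using h False lp by (auto simp: nth_append)
      qed
    qed
  qed
qed

lemma is_cis_fst_ge: "is_cis A B ps \<Longrightarrow> k < length ps \<Longrightarrow> k \<le> fst (ps ! k)"
proof (induction k)
  case 0 then show ?case by simp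
next
  case (Suc k)
  then have "fst (ps ! k) < fst (ps ! Suc k)" unfolding is_cis_def by blast
  with Suc show ?case by simp
qed

lemma is_cis_len: "is_cis A B ps \<Longrightarrow> length ps \<le> length A"
proof (cases "ps = []")
  case False
  assume h: "is_cis A B ps"
  have "length ps - 1 \<le> fst (ps ! (length ps - 1))" using is_cis_fst_ge[OF h] False by simp
  moreover have "fst (ps ! (length ps - 1)) < length A" using h False unfolding is_cis_def by simp
  ultimately show ?thesis by linarith
qed simp

lemma L_fin: "finite {length ps | ps. is_cis A B ps \<and> ps \<noteq> [] \<and> last ps = (i, j)}"
  by (rule finite_subset[of _ "{..length A}"]) (auto dest: is_cis_len)

lemma L_wit: assumes "mt A B i j"
  shows "\<exists>ps. is_cis A B ps \<and> ps \<noteq> [] \<and> last ps = (i, j) \<and> length ps = lcis_end A B i j"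
proof -
  have "[(i,j)] \<noteq> [] \<and> is_cis A B [(i,j)] \<and> last [(i,j)] = (i, j)"
    using assms is_cis_snoc[of A B "[]" "(i,j)"] by (simp add: mt_def)
  then have ne: "{length ps | ps. is_cis A B ps \<and> ps \<noteq> [] \<and> last ps = (i, j)} \<noteq> {}" by blast
  show ?thesis using Max_in[OF L_fin ne] unfolding lcis_end_def by auto
qed

lemma L_ge: "is_cis A B ps \<Longrightarrow> ps \<noteq> [] \<Longrightarrow> last ps = (i, j) \<Longrightarrow> length ps \<le> lcis_end A B i j"
  unfolding lcis_end_def by (rule Max_ge[OF L_fin]) blast

lemma L_pos: "mt A B i j \<Longrightarrow> 1 \<le> lcis_end A B i j"
  using L_wit by (metis One_nat_def Suc_leI length_greater_0_conv)

lemma L_ext: assumes "mt A B i j" "mt A B a b" "a < i" "b < j" "A ! a < A ! i"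
  shows "\<exists>ps. is_cis A B (ps @ [(a, b), (i, j)]) \<and> length ps + 2 = lcis_end A B a b + 1"
proof -
  obtain qs where q: "is_cis A B qs" "qs \<noteq> []" "last qs = (a, b)" "length qs = lcis_end A B a b"
    using L_wit[OF assms(2)] by blast
  have qe: "qs = butlast qs @ [(a,b)]" using q by (metis append_butlast_last_id)
  have "is_cis A B (qs @ [(i,j)])" using q assms by (subst is_cis_snoc) (auto simp: mt_def)
  then have "is_cis A B (butlast qs @ [(a, b), (i, j)])" using qe by (metis append.assoc append_Cons append_Nil)
  moreover have "length (butlast qs) + 2 = lcis_end A B a b + 1" using q by (cases qs) auto
  ultimately show ?thesis by blast
qed

lemma L_a: assumes "mt A B i j" "mt A B a b" "a < i" "b < j" "A ! a < A ! i"
  shows "lcis_end A B a b + 1 \<le> lcis_end A B i j"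
proof -
  obtain ps where "is_cis A B (ps @ [(a, b), (i, j)])" "length ps + 2 = lcis_end A B a b + 1"
    using L_ext[OF assms] by blast
  moreover have "last (ps @ [(a, b), (i, j)]) = (i,j)" by simp
  ultimately show ?thesis using L_ge[of A B "ps @ [(a, b), (i, j)]" i j] by simp
qed

lemma L_b: assumes "mt A B i j" "1 < lcis_end A B i j"
  shows "\<exists>a b. a < i \<and> b < j \<and> mt A B a b \<and> A ! a < A ! i \<and> lcis_end A B i j \<le> lcis_end A B a b + 1"
proof -
  obtain ps where p: "is_cis A B ps" "ps \<noteq> []" "last ps = (i, j)" "length ps = lcis_end A B i j"
    using L_wit[OF assms(1)] by blast
  define qs where "qs = butlast ps"
  have pe: "ps = qs @ [(i,j)]" using p unfolding qs_def by (metis append_butlast_last_id)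
  have qne: "qs \<noteq> []" using p assms(2) pe by auto
  obtain a b where ab: "last qs = (a,b)" by fastforce
  have c: "is_cis A B qs" "a < i" "b < j" "A ! a < A ! i"
    using p(1) qne ab unfolding pe is_cis_snoc by auto
  have c2: "a < length A" "b < length B" "A ! a = B ! b"
    using c(1) qne ab unfolding is_cis_def
    by (metis One_nat_def diff_less last_conv_nth length_greater_0_conv less_one fst_conv snd_conv)+
  have "length qs \<le> lcis_end A B a b" using L_ge[OF c(1) qne ab] .
  then show ?thesis using c c2 p(4) pe unfolding mt_def by (intro exI[of _ a] exI[of _ b]) auto
qed


definition pprop :: "'a::linorder list \<Rightarrow> 'a list \<Rightarrow> (nat \<times> nat \<Rightarrow> nat option) \<Rightarrow> (nat \<times> nat \<Rightarrow> (int \<times> int) option) \<Rightarrow> nat \<Rightarrow> nat \<Rightarrow> nat \<Rightarrow> bool" where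
  "pprop A B inc par i j v \<longleftrightarrow> (par (i, j) = None \<longleftrightarrow> v = 1) \<and>
     (\<forall>p q. par (i, j) = Some (p, q) \<longrightarrow>
            (\<exists>i' j'. p = int i' \<and> q = int j' \<and> inc (i', j') = Some (v - 1)
               \<and> (\<exists>ps. is_cis A B (ps @ [(i', j'), (i, j)]) \<and> length ps + 2 = v)))"

lemma pprop_mono: "pprop A B inc par i j v \<Longrightarrow> inc \<subseteq>\<^sub>m inc' \<Longrightarrow> par' (i, j) = par (i, j) \<Longrightarrow> pprop A B inc' par' i j v"
  unfolding pprop_def map_le_def by (metis domI)

definition inv_in :: "'a::linorder list \<Rightarrow> 'a list \<Rightarrow> nat \<Rightarrow> nat \<Rightarrow> lcis_state \<Rightarrow> bool" where
  "inv_in A B r j0 st \<longleftrightarrow> (case st of (dp, dpi, par, inc, best, bj) \<Rightarrow>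
    (\<forall>j i'. i' < r \<longrightarrow> mt A B i' j \<longrightarrow> lcis_end A B i' j \<le> dp j) \<and>
    (\<forall>j<j0. mt A B r j \<longrightarrow> lcis_end A B r j \<le> dp j) \<and>
    (\<forall>j. 0 < dp j \<longrightarrow> (\<exists>i'\<le>r. dpi j = int i' \<and> inc (i', j) = Some (dp j))) \<and>
    (\<forall>i' j v. inc (i', j) = Some v \<longrightarrow> (i' < r \<or> (i' = r \<and> j < j0)) \<and> mt A B i' j \<and> v = lcis_end A B i' j \<and> pprop A B inc par i' j v) \<and>
    (\<forall>i' j. (r < i' \<or> (i' = r \<and> j0 \<le> j)) \<longrightarrow> par (i', j) = None) \<and>
    (\<forall>j<j0. B ! j < A ! r \<longrightarrow> dp j \<le> best) \<and>
    (best = 0 \<longrightarrow> bj = -1) \<and>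
    (0 < best \<longrightarrow> (\<exists>b<j0. bj = int b \<and> B ! b < A ! r \<and> dp b = best)))"

definition inv_out :: "'a::linorder list \<Rightarrow> 'a list \<Rightarrow> nat \<Rightarrow> lcis_state \<Rightarrow> bool" where
  "inv_out A B r st \<longleftrightarrow> (case st of (dp, dpi, par, inc, _, _) \<Rightarrow>
    (\<forall>j i'. i' < r \<longrightarrow> mt A B i' j \<longrightarrow> lcis_end A B i' j \<le> dp j) \<and>
    (\<forall>j. 0 < dp j \<longrightarrow> (\<exists>i'<r. dpi j = int i' \<and> inc (i', j) = Some (dp j))) \<and>
    (\<forall>i' j v. inc (i', j) = Some v \<longrightarrow> i' < r \<and> mt A B i' j \<and> v = lcis_end A B i' j \<and> pprop A B inc par i' j v) \<and>
    (\<forall>i' j. r \<le> i' \<longrightarrow> par (i', j) = None))"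

lemma inner_step:
  assumes r: "r < length A" and j0: "j0 < length B" and I: "inv_in A B r j0 st"
  shows "inv_in A B r (Suc j0) (lcis_inner_step A B r j0 st)"
proof -
  obtain dp dpi par inc best bj where st: "st = (dp, dpi, par, inc, best, bj)" by (cases st) auto
  have I1: "\<And>j i'. i' < r \<Longrightarrow> mt A B i' j \<Longrightarrow> lcis_end A B i' j \<le> dp j"
   and I2: "\<And>j. j < j0 \<Longrightarrow> mt A B r j \<Longrightarrow> lcis_end A B r j \<le> dp j"
   and I3: "\<And>j. 0 < dp j \<Longrightarrow> (\<exists>i'\<le>r. dpi j = int i' \<and> inc (i', j) = Some (dp j))"
   and I4: "\<And>i' j v. inc (i', j) = Some v \<Longrightarrow> (i' < r \<or> (i' = r \<and> j < j0)) \<and> mt A B i' j \<and> v = lcis_end A B i' j \<and> pprop A B inc par i' j v"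
   and I5: "\<And>i' j. (r < i' \<or> (i' = r \<and> j0 \<le> j)) \<Longrightarrow> par (i', j) = None"
   and I6: "\<And>j. j < j0 \<Longrightarrow> B ! j < A ! r \<Longrightarrow> dp j \<le> best"
   and I7: "best = 0 \<Longrightarrow> bj = -1"
   and I8: "0 < best \<Longrightarrow> (\<exists>b<j0. bj = int b \<and> B ! b < A ! r \<and> dp b = best)"
    using I unfolding st inv_in_def by auto
  have up: "lcis_end A B r j0 \<le> best + 1" if m: "mt A B r j0"
  proof (cases "1 < lcis_end A B r j0")
    case True
    then obtain a b where ab: "a < r" "b < j0" "mt A B a b" "A ! a < A ! r" "lcis_end A B r j0 \<le> lcis_end A B a b + 1"
      using L_b[OF m] by blast
    have "lcis_end A B a b \<le> dp b" using I1 ab by blast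
    moreover have "dp b \<le> best" using I6 ab unfolding mt_def by auto
    ultimately show ?thesis using ab by linarith
  qed simp
  have bestw: "\<exists>i' b. bj = int b \<and> b < j0 \<and> i' < r \<and> dpi b = int i' \<and> inc (i', b) = Some best
      \<and> mt A B i' b \<and> best = lcis_end A B i' b \<and> A ! i' < A ! r" if bp: "0 < best"
  proof -
    obtain b where b: "b < j0" "bj = int b" "B ! b < A ! r" "dp b = best" using I8 bp by blast
    obtain i' where i': "i' \<le> r" "dpi b = int i'" "inc (i', b) = Some (dp b)" using I3[of b] b bp by auto
    have h: "(i' < r \<or> (i' = r \<and> b < j0)) \<and> mt A B i' b \<and> dp b = lcis_end A B i' b" using I4 i' by blast
    then have "i' \<noteq> r" using b unfolding mt_def by auto
    then show ?thesis using h b i' by (intro exI[of _ i'] exI[of _ b]) (auto simp: mt_def)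
  qed
  define c where "c = (A ! r = B ! j0 \<and> best + 1 > dp j0)"
  define dp' where "dp' = (if c then dp(j0 := best + 1) else dp)"
  define dpi' where "dpi' = (if c then dpi(j0 := int r) else dpi)"
  define par' where "par' = (if c then (if bj \<noteq> -1 then par((r, j0) := Some (dpi (nat bj), bj)) else par) else par)"
  define inc' where "inc' = (if c then inc((r, j0) := Some (best + 1)) else inc)"
  define best' where "best' = (if B ! j0 < A ! r \<and> dp' j0 > best then dp' j0 else best)"
  define bj' where "bj' = (if B ! j0 < A ! r \<and> dp' j0 > best then int j0 else bj)"
  have res: "lcis_inner_step A B r j0 st = (dp', dpi', par', inc', best', bj')"
    unfolding st lcis_inner_step_def dp'_def dpi'_def par'_def inc'_def best'_def bj'_def c_def
    by (simp add: Let_def)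
  have incN: "inc (r, j0) = None" using I4 by (metis less_irrefl option.exhaust)
  have parN: "par (r, j0) = None" using I5 by blast
  have incle: "inc \<subseteq>\<^sub>m inc'" unfolding inc'_def using incN by (auto simp: map_le_def)
  have dple: "dp j \<le> dp' j" for j unfolding dp'_def c_def by auto
  have dpo: "j \<noteq> j0 \<Longrightarrow> dp' j = dp j" for j unfolding dp'_def by auto
  have dpj0: "B ! j0 < A ! r \<Longrightarrow> dp' j0 = dp j0" unfolding dp'_def c_def by auto
  have Lc: "c \<Longrightarrow> lcis_end A B r j0 = best + 1"
  proof -
    assume c
    then have m: "mt A B r j0" using r j0 unfolding c_def mt_def by auto
    show ?thesis
    proof (cases "best = 0")
      case True then show ?thesis using up[OF m] L_pos[OF m] by simp
    next
      case False
      then obtain i' b where w: "b < j0" "i' < r" "inc (i', b) = Some best" "mt A B i' b" "best = lcis_end A B i' b" "A ! i' < A ! r"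
        using bestw by blast
      have "lcis_end A B i' b + 1 \<le> lcis_end A B r j0" using L_a[OF m w(4) w(2) w(1) w(6)] .
      then show ?thesis using up[OF m] w by simp
    qed
  qed
  have N1: "\<forall>j i'. i' < r \<longrightarrow> mt A B i' j \<longrightarrow> lcis_end A B i' j \<le> dp' j"
    using I1 dple le_trans by blast
  have N2: "\<forall>j<Suc j0. mt A B r j \<longrightarrow> lcis_end A B r j \<le> dp' j"
  proof (intro allI impI)
    fix j assume j: "j < Suc j0" and m: "mt A B r j"
    show "lcis_end A B r j \<le> dp' j"
    proof (cases "j < j0")
      case True then show ?thesis using I2 m dple le_trans by blast
    next
      case False
      then have jj: "j = j0" using j by simp
      show ?thesis
      proof (cases c)
        case True then show ?thesis using Lc jj unfolding dp'_def by simp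
      next
        case False
        then have "best + 1 \<le> dp j0" using m jj unfolding c_def mt_def by auto
        then show ?thesis using up m jj dpo dple by (meson le_trans)
      qed
    qed
  qed
  have N3: "\<forall>j. 0 < dp' j \<longrightarrow> (\<exists>i'\<le>r. dpi' j = int i' \<and> inc' (i', j) = Some (dp' j))"
  proof (intro allI impI)
    fix j assume "0 < dp' j"
    show "\<exists>i'\<le>r. dpi' j = int i' \<and> inc' (i', j) = Some (dp' j)"
    proof (cases "c \<and> j = j0")
      case True then show ?thesis unfolding dpi'_def inc'_def dp'_def by auto
    next
      case False
      then have e: "dp' j = dp j" "dpi' j = dpi j" unfolding dp'_def dpi'_def by auto
      then obtain i' where "i' \<le> r" "dpi j = int i'" "inc (i', j) = Some (dp j)" using I3[of j] \<open>0 < dp' j\<close> by auto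
      then show ?thesis using e incle by (metis domI map_le_def)
    qed
  qed
  have parO: "(i', j) \<noteq> (r, j0) \<Longrightarrow> par' (i', j) = par (i', j)" for i' j unfolding par'_def by auto
  have N4: "\<forall>i' j v. inc' (i', j) = Some v \<longrightarrow> (i' < r \<or> (i' = r \<and> j < Suc j0)) \<and> mt A B i' j \<and> v = lcis_end A B i' j \<and> pprop A B inc' par' i' j v"
  proof (intro allI impI)
    fix i' j v assume h: "inc' (i', j) = Some v"
    show "(i' < r \<or> (i' = r \<and> j < Suc j0)) \<and> mt A B i' j \<and> v = lcis_end A B i' j \<and> pprop A B inc' par' i' j v"
    proof (cases "c \<and> (i', j) = (r, j0)")
      case True
      then have e: "i' = r" "j = j0" "v = best + 1" c using h unfolding inc'_def by auto
      have m: "mt A B r j0" using r j0 e(4) unfolding c_def mt_def by auto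
      have pp: "pprop A B inc' par' r j0 (best + 1)"
      proof (cases "best = 0")
        case True
        then have "par' (r, j0) = None" using I7 parN unfolding par'_def by auto
        then show ?thesis using True unfolding pprop_def by simp
      next
        case False
        then obtain i'' b where w: "bj = int b" "b < j0" "i'' < r" "dpi b = int i''" "inc (i'', b) = Some best"
          "mt A B i'' b" "best = lcis_end A B i'' b" "A ! i'' < A ! r"
          using bestw by blast
        have pe: "par' (r, j0) = Some (int i'', int b)" using e(4) w unfolding par'_def by auto
        have inc2: "inc' (i'', b) = Some best" using w(5) incle by (metis domI map_le_def)
        obtain ps where "is_cis A B (ps @ [(i'', b), (r, j0)])" "length ps + 2 = lcis_end A B i'' b + 1"
          using L_ext[OF m w(6) w(3) w(2) w(8)] by blast
        then show ?thesis unfolding pprop_def using pe inc2 w False by auto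
      qed
      show ?thesis using e m Lc pp by simp
    next
      case False
      then have h0: "inc (i', j) = Some v" using h unfolding inc'_def by (auto split: if_splits)
      then have "(i', j) \<noteq> (r, j0)" using incN by auto
      then have "par' (i', j) = par (i', j)" using parO by blast
      then show ?thesis using I4[OF h0] pprop_mono[OF _ incle, of A B par i' j v par'] by auto
    qed
  qed
  have N5: "\<forall>i' j. (r < i' \<or> (i' = r \<and> Suc j0 \<le> j)) \<longrightarrow> par' (i', j) = None"
    using I5 parO by auto
  have N6: "\<forall>j<Suc j0. B ! j < A ! r \<longrightarrow> dp' j \<le> best'"
  proof (intro allI impI)
    fix j assume j: "j < Suc j0" and b: "B ! j < A ! r"
    show "dp' j \<le> best'"
    proof (cases "j = j0")
      case True then show ?thesis unfolding best'_def using b by auto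
    next
      case False
      then show ?thesis using I6[of j] j b dpo unfolding best'_def by auto
    qed
  qed
  have N7: "best' = 0 \<longrightarrow> bj' = -1" using I7 unfolding best'_def bj'_def by auto
  have N8: "0 < best' \<longrightarrow> (\<exists>b<Suc j0. bj' = int b \<and> B ! b < A ! r \<and> dp' b = best')"
  proof
    assume bp: "0 < best'"
    show "\<exists>b<Suc j0. bj' = int b \<and> B ! b < A ! r \<and> dp' b = best'"
    proof (cases "B ! j0 < A ! r \<and> dp' j0 > best")
      case True then show ?thesis unfolding best'_def bj'_def by auto
    next
      case False
      then have "best' = best" "bj' = bj" unfolding best'_def bj'_def by auto
      then obtain b where "b < j0" "bj' = int b" "B ! b < A ! r" "dp b = best'" using I8 bp by auto
      then show ?thesis using dpo by (intro exI[of _ b]) auto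
    qed
  qed
  show ?thesis unfolding res inv_in_def using N1 N2 N3 N4 N5 N6 N7 N8 by simp
qed

lemma inner_fold:
  assumes r: "r < length A" and I: "inv_in A B r 0 s"
  shows "k \<le> length B \<Longrightarrow> inv_in A B r k (fold (lcis_inner_step A B r) [0..<k] s)"
proof (induction k)
  case 0 then show ?case using I by simp
next
  case (Suc k)
  then show ?case using inner_step[OF r, of k] by simp
qed

lemma outer_step:
  assumes r: "r < length A" and I: "inv_out A B r st"
  shows "inv_out A B (Suc r) (lcis_outer_step A B r st)"
proof -
  obtain dp dpi par inc x y where st: "st = (dp, dpi, par, inc, x, y)" by (cases st) auto
  have "inv_in A B r 0 (dp, dpi, par, inc, 0, -1)"
  proof -
    have O1: "\<forall>j i'. i' < r \<longrightarrow> mt A B i' j \<longrightarrow> lcis_end A B i' j \<le> dp j"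
     and O2: "\<forall>j. 0 < dp j \<longrightarrow> (\<exists>i'<r. dpi j = int i' \<and> inc (i', j) = Some (dp j))"
     and O3: "\<forall>i' j v. inc (i', j) = Some v \<longrightarrow> i' < r \<and> mt A B i' j \<and> v = lcis_end A B i' j \<and> pprop A B inc par i' j v"
     and O4: "\<forall>i' j. r \<le> i' \<longrightarrow> par (i', j) = None"
      using I unfolding st inv_out_def by auto
    have "\<forall>j. 0 < dp j \<longrightarrow> (\<exists>i'\<le>r. dpi j = int i' \<and> inc (i', j) = Some (dp j))"
      using O2 less_imp_le by blast
    then show ?thesis unfolding inv_in_def using O1 O3 O4 by auto
  qed
  from inner_fold[OF r this order.refl]
  have J: "inv_in A B r (length B) (lcis_outer_step A B r st)"
    unfolding st lcis_outer_step_def by simp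
  obtain dp' dpi' par' inc' b bj where e: "lcis_outer_step A B r st = (dp', dpi', par', inc', b, bj)"
    by (cases "lcis_outer_step A B r st") auto
  have J1: "\<And>j i'. i' < r \<Longrightarrow> mt A B i' j \<Longrightarrow> lcis_end A B i' j \<le> dp' j"
   and J2: "\<And>j. j < length B \<Longrightarrow> mt A B r j \<Longrightarrow> lcis_end A B r j \<le> dp' j"
   and J3: "\<And>j. 0 < dp' j \<Longrightarrow> (\<exists>i'\<le>r. dpi' j = int i' \<and> inc' (i', j) = Some (dp' j))"
   and J4: "\<And>i' j v. inc' (i', j) = Some v \<Longrightarrow> (i' < r \<or> (i' = r \<and> j < length B)) \<and> mt A B i' j \<and> v = lcis_end A B i' j \<and> pprop A B inc' par' i' j v"
   and J5: "\<And>i' j. (r < i' \<or> (i' = r \<and> length B \<le> j)) \<Longrightarrow> par' (i', j) = None"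
    using J unfolding e inv_in_def by auto
  have K1: "\<forall>j i'. i' < Suc r \<longrightarrow> mt A B i' j \<longrightarrow> lcis_end A B i' j \<le> dp' j"
    using J1 J2 by (metis less_antisym mt_def)
  have K2: "\<forall>j. 0 < dp' j \<longrightarrow> (\<exists>i'<Suc r. dpi' j = int i' \<and> inc' (i', j) = Some (dp' j))"
    using J3 by (meson le_imp_less_Suc)
  have K3: "\<forall>i' j v. inc' (i', j) = Some v \<longrightarrow> i' < Suc r \<and> mt A B i' j \<and> v = lcis_end A B i' j \<and> pprop A B inc' par' i' j v"
  proof (intro allI impI)
    fix i' j v assume h: "inc' (i', j) = Some v"
    show "i' < Suc r \<and> mt A B i' j \<and> v = lcis_end A B i' j \<and> pprop A B inc' par' i' j v"
      using J4[OF h] by auto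
  qed
  have K4: "\<forall>i' j. Suc r \<le> i' \<longrightarrow> par' (i', j) = None" using J5 by simp
  show ?thesis unfolding e inv_out_def using K1 K2 K3 K4 by simp
qed

lemma outer_fold:
  "k \<le> length A \<Longrightarrow> inv_out A B k (fold (lcis_outer_step A B) [0..<k] ((\<lambda>_. 0), (\<lambda>_. -1), Map.empty, Map.empty, 0, -1))"
proof (induction k)
  case 0 then show ?case by (simp add: inv_out_def)
next
  case (Suc k)
  then show ?case using outer_step[of k A] by simp
qed

theorem mainTheorem1:
  fixes A B :: "'a::linorder list"
    and inc :: "nat \<times> nat \<Rightarrow> nat option"
    and parent :: "nat \<times> nat \<Rightarrow> (int \<times> int) option"
  assumes "lcis_lengths A B = (inc, parent)"
    and "inc (i, j) = Some l"
  shows "i < length A \<and> j < length B \<and> A ! i = B ! j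
       \<and> l = lcis_end A B i j
       \<and> (parent (i, j) = None \<longleftrightarrow> l = 1)
       \<and> (\<forall>p q. parent (i, j) = Some (p, q) \<longrightarrow>
            (\<exists>i' j'. p = int i' \<and> q = int j' \<and> inc (i', j') = Some (l - 1)
               \<and> (\<exists>ps. is_cis A B (ps @ [(i', j'), (i, j)]) \<and> length ps + 2 = l)))"
proof -
  obtain dp dpi x y where e: "fold (lcis_outer_step A B) [0..<length A] ((\<lambda>_. 0), (\<lambda>_. -1), Map.empty, Map.empty, 0, -1)
     = (dp, dpi, parent, inc, x, y)"
    using assms(1) unfolding lcis_lengths_def by (auto split: prod.splits)
  have "inv_out A B (length A) (dp, dpi, parent, inc, x, y)" using outer_fold[OF order.refl] e by metis
  then have "mt A B i j \<and> l = lcis_end A B i j \<and> pprop A B inc parent i j l"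
    using assms(2) unfolding inv_out_def by auto
  then show ?thesis unfolding mt_def pprop_def by blast
qed

end
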